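(* Let $m\ge n$ and let $\Gamma$ be a subset of $M_{m\times n}(\mathbb{C})$ such that for any $A,B\in\Gamma$ there exists a function $p:[0,1]\rightarrow M_{m\times n}(\mathbb{C})$ whose entries are analytic functions on $[0,1]$ with $p(0)=A$, $p(1)=B$ and $p([0,1])\subset\Gamma$. Let $\Gamma_d$ be the set of matrices in $\Gamma$ whose singular values are distinct. If $\Gamma$ contains at least one matrix with distinct singular values, then $\Gamma_d$ is dense in $\Gamma$.
   Context: $M_{m\times n}(\mathbb{C})$ denotes the set of $m\times n$ complex matrices with the topology induced by the Frobenius norm; throughout $m\ge n$. The singular values of $A\in M_{m\times n}(\mathbb{C})$ are the $n$ nonnegative square roots of the eigenvalues of $A^{\ast}A$, counted with multiplicity; distinct means pairwise different. A complex-valued function is analytic on $[0,1]$ if it is the restriction of a function defined on an open interval containing $[0,1]$ which around each point is given by a convergent power series. *)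

theory Defs
  imports "HOL-Analysis.Analysis" "Jordan_Normal_Form.Schur_Decomposition"
    "HOL-Computational_Algebra.Polynomial"
begin

text \<open>Singular values of A (an m x n complex matrix): the n nonnegative square roots
  of the eigenvalues of A^* A, counted with (algebraic) multiplicity, i.e. of the
  roots of the characteristic polynomial of A^* A.\<close>
definition singular_values :: "complex mat \<Rightarrow> real multiset" where
  "singular_values A = image_mset (\<lambda>z. sqrt (Re z)) (proots (char_poly (mat_adjoint A * A)))"

definition distinct_singular_values :: "complex mat \<Rightarrow> bool" where
  "distinct_singular_values A \<longleftrightarrow> (\<forall>s. count (singular_values A) s \<le> 1)"

definition frob_dist :: "complex mat \<Rightarrow> complex mat \<Rightarrow> real" where
  "frob_dist A B = sqrt (\<Sum>i<dim_row A. \<Sum>j<dim_col A. (cmod (A $$ (i,j) - B $$ (i,j)))\<^sup>2)"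

definition analytic_on_unit_interval :: "(real \<Rightarrow> complex) \<Rightarrow> bool" where
  "analytic_on_unit_interval f \<longleftrightarrow>
     (\<exists>a b g. a < 0 \<and> 1 < b \<and> (\<forall>t\<in>{0..1}. g t = f t) \<and>
        (\<forall>x0\<in>{a<..<b}. \<exists>r>0. \<exists>c :: nat \<Rightarrow> complex.
            \<forall>x. \<bar>x - x0\<bar> < r \<longrightarrow> (\<lambda>k. c k * of_real ((x - x0) ^ k)) sums g x))"

end

theory Submission
  imports Defs "Subresultants.Subresultant_Gcd" "HOL-Complex_Analysis.Complex_Analysis"
    "HOL-Computational_Algebra.Field_as_Ring"
begin


lemma mat_adjoint_carrier: "B \<in> carrier_mat m n \<Longrightarrow> mat_adjoint B \<in> carrier_mat n m"
  unfolding mat_adjoint_def by auto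

lemma mat_adjoint_index: "B \<in> carrier_mat m n \<Longrightarrow> i < n \<Longrightarrow> j < m \<Longrightarrow> mat_adjoint B $$ (i,j) = cnj (B $$ (j,i))"
  unfolding mat_adjoint_def by (auto simp: mat_of_rows_index)

lemma sum_identity:
  fixes B :: "nat \<Rightarrow> nat \<Rightarrow> complex" and v :: "nat \<Rightarrow> complex"
  shows "(\<Sum>i<n. (\<Sum>j<n. (\<Sum>l<m. cnj (B l i) * B l j) * v j) * cnj (v i))
    = (\<Sum>l<m. (\<Sum>j<n. B l j * v j) * cnj (\<Sum>i<n. B l i * v i))"
proof -
  have "(\<Sum>i<n. (\<Sum>j<n. (\<Sum>l<m. cnj (B l i) * B l j) * v j) * cnj (v i))
     = (\<Sum>i<n. \<Sum>j<n. \<Sum>l<m. (B l j * v j) * cnj (B l i * v i))"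
    by (simp add: sum_distrib_left sum_distrib_right mult_ac)
  also have "\<dots> = (\<Sum>i<n. \<Sum>l<m. \<Sum>j<n. (B l j * v j) * cnj (B l i * v i))"
    by (rule sum.cong[OF refl], rule sum.swap)
  also have "\<dots> = (\<Sum>l<m. \<Sum>i<n. \<Sum>j<n. (B l j * v j) * cnj (B l i * v i))"
    by (rule sum.swap)
  also have "\<dots> = (\<Sum>l<m. (\<Sum>j<n. B l j * v j) * cnj (\<Sum>i<n. B l i * v i))"
    by (rule sum.cong[OF refl], simp only: cnj_sum sum_product, rule sum.swap)
  finally show ?thesis .
qed

lemma aux_div_nonneg:
  fixes a p q :: complex
  assumes "a * p = q" "Re q \<ge> 0" "Im q = 0" "Re p > 0" "Im p = 0"
  shows "Im a = 0 \<and> Re a \<ge> 0"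
proof -
  have r: "Re q = Re a * Re p" and i: "Im q = Im a * Re p"
    using assms(1,5) by (auto simp: complex_eq_iff)
  from i assms(3,4) have "Im a = 0" by simp
  moreover from r assms(2,4) have "Re a \<ge> 0" by (simp add: zero_le_mult_iff)
  ultimately show ?thesis by simp
qed

lemma eig_nonneg:
  fixes B :: "complex mat"
  assumes B: "B \<in> carrier_mat m n" and root: "poly (char_poly (mat_adjoint B * B)) a = 0"
  shows "Im a = 0 \<and> Re a \<ge> 0"
proof -
  define H where "H = mat_adjoint B * B"
  have H: "H \<in> carrier_mat n n" unfolding H_def using B mat_adjoint_carrier[OF B] by auto
  have "eigenvalue H a" using root eigenvalue_root_char_poly[OF H] unfolding H_def by auto
  then obtain v where v: "v \<in> carrier_vec n" "v \<noteq> 0\<^sub>v n" "H *\<^sub>v v = a \<cdot>\<^sub>v v"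
    unfolding eigenvalue_def eigenvector_def using H by auto
  define w where "w = B *\<^sub>v v"
  have w: "w \<in> carrier_vec m" unfolding w_def using B v by auto
  have dimA: "dim_row (mat_adjoint B) = n" "dim_col (mat_adjoint B) = m"
    using mat_adjoint_carrier[OF B] by auto
  have Hij: "H $$ (i,j) = (\<Sum>l<m. cnj (B$$(l,i)) * B$$(l,j))" if "i<n" "j<n" for i j
  proof -
    have "H $$ (i,j) = row (mat_adjoint B) i \<bullet> col B j"
      unfolding H_def using that B dimA by (simp add: index_mult_mat)
    also have "\<dots> = (\<Sum>l\<in>{0..<m}. mat_adjoint B $$ (i,l) * B $$ (l,j))"
      unfolding scalar_prod_def using that B dimA by simp
    also have "\<dots> = (\<Sum>l<m. cnj (B$$(l,i)) * B$$(l,j))"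
      unfolding atLeast0LessThan
      by (rule sum.cong[OF refl], simp add: mat_adjoint_index[OF B that(1)])
    finally show ?thesis .
  qed
  have Hv: "(H *\<^sub>v v) $ i = (\<Sum>j<n. H$$(i,j) * v$j)" if "i<n" for i
    using that H v(1) by (simp add: scalar_prod_def atLeast0LessThan)
  have Bv: "w $ l = (\<Sum>j<n. B$$(l,j) * v$j)" if "l<m" for l
    using that B v(1) unfolding w_def by (simp add: scalar_prod_def atLeast0LessThan)
  have "(H *\<^sub>v v) \<bullet>c v = (\<Sum>i<n. (H *\<^sub>v v) $ i * cnj (v $ i))"
    using v unfolding scalar_prod_def atLeast0LessThan by simp
  also have "\<dots> = (\<Sum>i<n. (\<Sum>j<n. (\<Sum>l<m. cnj (B$$(l,i)) * B$$(l,j)) * v$j) * cnj (v$i))"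
    by (rule sum.cong[OF refl], simp add: Hv Hij)
  also have "\<dots> = (\<Sum>l<m. (\<Sum>j<n. B$$(l,j) * v$j) * cnj (\<Sum>i<n. B$$(l,i) * v$i))"
    by (rule sum_identity[where B="\<lambda>l i. B$$(l,i)" and v="\<lambda>j. v$j"])
  also have "\<dots> = (\<Sum>l<m. w$l * cnj (w$l))"
    by (rule sum.cong[OF refl], simp add: Bv)
  also have "\<dots> = w \<bullet>c w"
    using w by (simp add: scalar_prod_def atLeast0LessThan)
  finally have e1: "(H *\<^sub>v v) \<bullet>c v = w \<bullet>c w" .
  have e2: "(H *\<^sub>v v) \<bullet>c v = a * (v \<bullet>c v)"
    unfolding v(3) using v by (simp add: smult_scalar_prod_distrib[of _ n])
  have q: "w \<bullet>c w \<ge> 0" by auto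
  have p: "v \<bullet>c v > 0" using v by auto
  from e1 e2 q p show ?thesis
    by (intro aux_div_nonneg[of a "v \<bullet>c v" "w \<bullet>c w"]) (auto simp: less_eq_complex_def less_complex_def)
qed

lemma count_image_le1:
  assumes inj: "inj_on h (set_mset M)" and c: "\<forall>a. count M a \<le> 1"
  shows "count (image_mset h M) s \<le> 1"
proof (cases "s \<in> h ` set_mset M")
  case True
  then obtain a where a: "a \<in># M" "s = h a" by auto
  have "h -` {s} \<inter> set_mset M = {a}" using inj a unfolding inj_on_def by blast
  then show ?thesis using c unfolding count_image_mset by simp
next
  case False
  then have "h -` {s} \<inter> set_mset M = {}" by auto
  then show ?thesis unfolding count_image_mset by simp
qed


lemma count_le_image: "count M a \<le> count (image_mset h M) (h a)"
  by (induction M) auto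

lemma poly_gcd_0_iff:
  fixes f g :: "complex poly"
  shows "poly (gcd f g) a = 0 \<longleftrightarrow> poly f a = 0 \<and> poly g a = 0"
  by (simp add: poly_eq_0_iff_dvd)

lemma gcd_deg0_iff:
  fixes f g :: "complex poly"
  assumes "f \<noteq> 0"
  shows "degree (gcd f g) = 0 \<longleftrightarrow> (\<forall>a. \<not> (poly f a = 0 \<and> poly g a = 0))"
proof
  assume d: "degree (gcd f g) = 0"
  have "gcd f g \<noteq> 0" using assms by simp
  obtain c where c: "gcd f g = [:c:]" using d by (rule degree_eq_zeroE)
  with \<open>gcd f g \<noteq> 0\<close> have "c \<noteq> 0" by auto
  then have "poly (gcd f g) a \<noteq> 0" for a using c by simp
  then show "\<forall>a. \<not> (poly f a = 0 \<and> poly g a = 0)" using poly_gcd_0_iff by blast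
next
  assume h: "\<forall>a. \<not> (poly f a = 0 \<and> poly g a = 0)"
  show "degree (gcd f g) = 0"
  proof (rule ccontr)
    assume "degree (gcd f g) \<noteq> 0"
    then have "\<not> constant (poly (gcd f g))" by (simp add: constant_degree)
    then obtain a where "poly (gcd f g) a = 0" using Fundamental_Theorem_Algebra.fundamental_theorem_of_algebra by blast
    then show False using h by (simp add: poly_gcd_0_iff)
  qed
qed

lemma distinct_iff:
  fixes B :: "complex mat"
  assumes B: "B \<in> carrier_mat m n"
  shows "distinct_singular_values B \<longleftrightarrow>
    resultant (char_poly (mat_adjoint B * B)) (pderiv (char_poly (mat_adjoint B * B))) \<noteq> 0"
proof -
  define f where "f = char_poly (mat_adjoint B * B)"
  have H: "mat_adjoint B * B \<in> carrier_mat n n" using B mat_adjoint_carrier[OF B] by auto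
  have f0: "f \<noteq> 0" using degree_monic_char_poly[OF H] unfolding f_def by auto
  have "resultant f (pderiv f) \<noteq> 0 \<longleftrightarrow> rsquarefree f"
    unfolding resultant_0_gcd gcd_deg0_iff[OF f0] rsquarefree_roots by simp
  also have "\<dots> \<longleftrightarrow> (\<forall>a. count (proots f) a \<le> 1)"
    unfolding rsquarefree_def count_proots[OF f0] using f0 by (auto simp: le_Suc_eq)
  finally have r: "resultant f (pderiv f) \<noteq> 0 \<longleftrightarrow> (\<forall>a. count (proots f) a \<le> 1)" .
  have inj: "inj_on (\<lambda>z. sqrt (Re z)) (set_mset (proots f))"
  proof (rule inj_onI)
    fix x y assume x: "x \<in># proots f" and y: "y \<in># proots f" and e: "sqrt (Re x) = sqrt (Re y)"
    have "poly f x = 0" "poly f y = 0" using x y f0 by auto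
    then have "Im x = 0" "Im y = 0" using eig_nonneg[OF B] unfolding f_def by blast+
    moreover have "Re x = Re y" using e by simp
    ultimately show "x = y" by (simp add: complex_eq_iff)
  qed
  have "distinct_singular_values B \<longleftrightarrow> (\<forall>a. count (proots f) a \<le> 1)"
    unfolding distinct_singular_values_def singular_values_def f_def[symmetric]
  proof
    assume "\<forall>s. count (image_mset (\<lambda>z. sqrt (Re z)) (proots f)) s \<le> 1"
    then show "\<forall>a. count (proots f) a \<le> 1"
      using count_le_image[of "proots f" _ "\<lambda>z. sqrt (Re z)"] le_trans by metis
  next
    assume "\<forall>a. count (proots f) a \<le> 1"
    then show "\<forall>s. count (image_mset (\<lambda>z. sqrt (Re z)) (proots f)) s \<le> 1"
      using count_image_le1[OF inj] by blast
  qed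
  with r show ?thesis unfolding f_def by simp
qed



definition hpoly :: "complex set \<Rightarrow> (complex \<Rightarrow> complex poly) \<Rightarrow> bool" where
  "hpoly U P \<longleftrightarrow> (\<forall>k. (\<lambda>z. coeff (P z) k) holomorphic_on U)"

lemma hpoly_const: "hpoly U (\<lambda>z. p)"
  unfolding hpoly_def by simp

lemma hpoly_pconst: "f holomorphic_on U \<Longrightarrow> hpoly U (\<lambda>z. [:f z:])"
  unfolding hpoly_def
proof
  fix k assume f: "f holomorphic_on U"
  show "(\<lambda>z. coeff [:f z:] k) holomorphic_on U"
    using f by (cases k) simp_all
qed

lemma hpoly_add: "hpoly U P \<Longrightarrow> hpoly U Q \<Longrightarrow> hpoly U (\<lambda>z. P z + Q z)"
  unfolding hpoly_def by (auto intro: holomorphic_intros)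

lemma hpoly_mult: "hpoly U P \<Longrightarrow> hpoly U Q \<Longrightarrow> hpoly U (\<lambda>z. P z * Q z)"
  unfolding hpoly_def coeff_mult by (auto intro!: holomorphic_intros)

lemma hpoly_sum: "finite A \<Longrightarrow> (\<And>a. a \<in> A \<Longrightarrow> hpoly U (P a)) \<Longrightarrow> hpoly U (\<lambda>z. \<Sum>a\<in>A. P a z)"
  unfolding hpoly_def coeff_sum by (auto intro!: holomorphic_intros)

lemma hpoly_prod: "finite A \<Longrightarrow> (\<And>a. a \<in> A \<Longrightarrow> hpoly U (P a)) \<Longrightarrow> hpoly U (\<lambda>z. \<Prod>a\<in>A. P a z)"
proof (induction A rule: finite_induct)
  case empty
  then show ?case by (simp add: hpoly_const)
next
  case (insert x F)
  then show ?case by (simp add: hpoly_mult)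
qed

lemma hpoly_pderiv: "hpoly U P \<Longrightarrow> hpoly U (\<lambda>z. pderiv (P z))"
  unfolding hpoly_def coeff_pderiv by (auto intro!: holomorphic_intros)

lemma hpoly_det:
  assumes M: "\<And>z. M z \<in> carrier_mat n n"
    and ent: "\<And>i j. i < n \<Longrightarrow> j < n \<Longrightarrow> hpoly U (\<lambda>z. M z $$ (i,j))"
  shows "hpoly U (\<lambda>z. det (M z))"
proof -
  have "hpoly U (\<lambda>z. \<Sum>p | p permutes {0..<n}. of_int (sign p) * (\<Prod>i = 0..<n. M z $$ (i, p i)))"
  proof (rule hpoly_sum)
    show "finite {p. p permutes {0..<n}}" by (simp add: finite_permutations)
    fix p assume "p \<in> {p. p permutes {0..<n}}"
    then have p: "p permutes {0..<n}" by simp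
    show "hpoly U (\<lambda>z. of_int (sign p) * (\<Prod>i = 0..<n. M z $$ (i, p i)))"
    proof (rule hpoly_mult[OF hpoly_const], rule hpoly_prod)
      fix i assume i: "i \<in> {0..<n}"
      then have "p i < n" using p by (meson atLeastLessThan_iff permutes_in_image)
      then show "hpoly U (\<lambda>z. M z $$ (i, p i))" using i by (intro ent) auto
    qed simp
  qed
  then show ?thesis by (simp add: det_def'[OF M])
qed

lemma holo_det:
  assumes M: "\<And>z. M z \<in> carrier_mat n n"
    and ent: "\<And>i j. i < n \<Longrightarrow> j < n \<Longrightarrow> (\<lambda>z. M z $$ (i,j)) holomorphic_on U"
  shows "(\<lambda>z. det (M z)) holomorphic_on U"
proof -
  have "(\<lambda>z. \<Sum>p | p permutes {0..<n}. of_int (sign p) * (\<Prod>i = 0..<n. M z $$ (i, p i))) holomorphic_on U"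
  proof (rule holomorphic_on_sum)
    fix p assume "p \<in> {p. p permutes {0..<n}}"
    then have p: "p permutes {0..<n}" by simp
    show "(\<lambda>z. of_int (sign p) * (\<Prod>i = 0..<n. M z $$ (i, p i))) holomorphic_on U"
    proof (rule holomorphic_on_mult[OF holomorphic_on_const], rule holomorphic_on_prod)
      fix i assume i: "i \<in> {0..<n}"
      then have "p i < n" using p by (meson atLeastLessThan_iff permutes_in_image)
      then show "(\<lambda>z. M z $$ (i, p i)) holomorphic_on U" using i by (intro ent) auto
    qed
  qed
  then show ?thesis by (simp add: det_def'[OF M])
qed

lemma hpoly_char_poly:
  assumes N: "\<And>z. N z \<in> carrier_mat n n"
    and ent: "\<And>i j. i < n \<Longrightarrow> j < n \<Longrightarrow> (\<lambda>z. N z $$ (i,j)) holomorphic_on U"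
  shows "hpoly U (\<lambda>z. char_poly (N z))"
  unfolding char_poly_def
proof (rule hpoly_det)
  show "char_poly_matrix (N z) \<in> carrier_mat n n" for z using N by simp
  fix i j assume ij: "i < n" "j < n"
  have "char_poly_matrix (N z) $$ (i,j) = (if i = j then [:0,1:] else 0) + [:- (N z $$ (i,j)):]" for z
    using N[of z] ij unfolding char_poly_matrix_def by auto
  moreover have "hpoly U (\<lambda>z. (if i = j then [:0,1:] else 0) + [:- (N z $$ (i,j)):])"
    by (intro hpoly_add hpoly_const hpoly_pconst holomorphic_intros ent ij)
  ultimately show "hpoly U (\<lambda>z. char_poly_matrix (N z) $$ (i,j))" by simp
qed

lemma holo_resultant:
  assumes P: "hpoly U P" and Q: "hpoly U Q"
    and dP: "\<And>z. degree (P z) = d1" and dQ: "\<And>z. degree (Q z) = d2"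
  shows "(\<lambda>z. resultant (P z) (Q z)) holomorphic_on U"
proof -
  have "(\<lambda>z. det (sylvester_mat_sub d1 d2 (P z) (Q z))) holomorphic_on U"
  proof (rule holo_det)
    show "sylvester_mat_sub d1 d2 (P z) (Q z) \<in> carrier_mat (d1+d2) (d1+d2)" for z
      by (rule sylvester_mat_sub_carrier)
    fix i j assume ij: "i < d1 + d2" "j < d1 + d2"
    show "(\<lambda>z. sylvester_mat_sub d1 d2 (P z) (Q z) $$ (i, j)) holomorphic_on U"
      unfolding sylvester_mat_sub_index[OF ij]
      using P Q unfolding hpoly_def
      by (cases "i < d2"; cases "i \<le> j \<and> j - i \<le> d1"; cases "i - d2 \<le> j \<and> j \<le> i") auto
  qed
  then show ?thesis unfolding resultant_sub resultant_sub_def dP dQ .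
qed

lemma holo_Phi:
  assumes N: "\<And>z. N z \<in> carrier_mat n n"
    and ent: "\<And>i j. i < n \<Longrightarrow> j < n \<Longrightarrow> (\<lambda>z. N z $$ (i,j)) holomorphic_on U"
  shows "(\<lambda>z. resultant (char_poly (N z)) (pderiv (char_poly (N z)))) holomorphic_on U"
proof (rule holo_resultant)
  show h: "hpoly U (\<lambda>z. char_poly (N z))" by (rule hpoly_char_poly[OF N ent])
  show "hpoly U (\<lambda>z. pderiv (char_poly (N z)))" by (rule hpoly_pderiv[OF h])
  show "degree (char_poly (N z)) = n" for z using degree_monic_char_poly[OF N] by simp
  show "degree (pderiv (char_poly (N z))) = n - 1" for z
    using degree_monic_char_poly[OF N] by (simp add: degree_pderiv)
qed



lemma powser_local:
  fixes c :: "nat \<Rightarrow> complex" and g :: "real \<Rightarrow> complex"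
  assumes r: "r > 0" and s: "\<forall>x. \<bar>x - x0\<bar> < r \<longrightarrow> (\<lambda>k. c k * of_real ((x - x0) ^ k)) sums g x"
  shows "\<exists>G. G holomorphic_on ball (complex_of_real x0) r \<and> (\<forall>x. \<bar>x - x0\<bar> < r \<longrightarrow> G (of_real x) = g x)"
proof -
  have s': "(\<lambda>k. c k * of_real (x - x0) ^ k) sums g x" if "\<bar>x - x0\<bar> < r" for x
    using s that by (simp add: of_real_power)
  have cr: "ereal r \<le> conv_radius c"
  proof (rule conv_radius_geI_ex')
    fix \<rho> :: real assume "0 < \<rho>" "ereal \<rho> < ereal r"
    then have "\<bar>(x0 + \<rho>) - x0\<bar> < r" by simp
    from sums_summable[OF s'[OF this]] show "summable (\<lambda>n. c n * of_real \<rho> ^ n)" by simp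
  qed
  define G where "G = (\<lambda>z. eval_fps (Abs_fps c) (z - complex_of_real x0))"
  have "(eval_fps (Abs_fps c) \<circ> (\<lambda>z. z - complex_of_real x0)) holomorphic_on ball (complex_of_real x0) r"
  proof (rule holomorphic_on_compose_gen)
    show "(\<lambda>z. z - complex_of_real x0) holomorphic_on ball (complex_of_real x0) r" by (intro holomorphic_intros)
    show "eval_fps (Abs_fps c) holomorphic_on eball 0 (fps_conv_radius (Abs_fps c))"
      by (rule holomorphic_on_eval_fps) simp
    show "(\<lambda>z. z - complex_of_real x0) ` ball (complex_of_real x0) r \<subseteq> eball 0 (fps_conv_radius (Abs_fps c))"
    proof
      fix w :: complex assume "w \<in> (\<lambda>z. z - complex_of_real x0) ` ball (complex_of_real x0) r"
      then obtain z where z: "z \<in> ball (complex_of_real x0) r" "w = z - complex_of_real x0" by auto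
      then have "norm w < r" by (simp add: dist_norm norm_minus_commute)
      then have "ereal (norm w) < conv_radius c" using cr
        by (metis ereal_less_eq(3) order_less_le_trans less_ereal.simps(1))
      then show "w \<in> eball 0 (fps_conv_radius (Abs_fps c))"
        by (simp add: fps_conv_radius_def)
    qed
  qed
  then have "G holomorphic_on ball (complex_of_real x0) r" unfolding G_def comp_def .
  moreover have "G (of_real x) = g x" if "\<bar>x - x0\<bar> < r" for x
  proof -
    have "G (of_real x) = (\<Sum>n. c n * of_real (x - x0) ^ n)"
      unfolding G_def eval_fps_def by simp
    also have "\<dots> = g x" using s'[OF that] by (simp add: sums_iff)
    finally show ?thesis .
  qed
  ultimately show ?thesis by blast
qed

lemma local_entry:
  assumes an: "analytic_on_unit_interval f" and S: "S \<in> {0..1}"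
  shows "\<exists>r>0. \<exists>G Gc. G holomorphic_on ball (complex_of_real S) r \<and> Gc holomorphic_on ball (complex_of_real S) r \<and>
     (\<forall>x\<in>{0..1}. \<bar>x - S\<bar> < r \<longrightarrow> G (complex_of_real x) = f x \<and> Gc (complex_of_real x) = cnj (f x))"
proof -
  obtain a b g where ab: "a < 0" "1 < b" and gf: "\<forall>t\<in>{0..1}. g t = f t"
    and loc: "\<forall>x0\<in>{a<..<b}. \<exists>r>0. \<exists>c :: nat \<Rightarrow> complex.
            \<forall>x. \<bar>x - x0\<bar> < r \<longrightarrow> (\<lambda>k. c k * of_real ((x - x0) ^ k)) sums g x"
    using an unfolding analytic_on_unit_interval_def by blast
  have "S \<in> {a<..<b}" using S ab by auto
  then obtain r c where r: "r > 0" and s: "\<forall>x. \<bar>x - S\<bar> < r \<longrightarrow> (\<lambda>k. c k * of_real ((x - S) ^ k)) sums g x"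
    using loc by blast
  have s2: "\<forall>x. \<bar>x - S\<bar> < r \<longrightarrow> (\<lambda>k. cnj (c k) * of_real ((x - S) ^ k)) sums cnj (g x)"
  proof (intro allI impI)
    fix x assume "\<bar>x - S\<bar> < r"
    then have "(\<lambda>k. c k * of_real ((x - S) ^ k)) sums g x" using s by blast
    then have "(\<lambda>k. cnj (c k * of_real ((x - S) ^ k))) sums cnj (g x)" by (simp only: sums_cnj)
    then show "(\<lambda>k. cnj (c k) * of_real ((x - S) ^ k)) sums cnj (g x)" by simp
  qed
  obtain G where G: "G holomorphic_on ball (complex_of_real S) r" "\<forall>x. \<bar>x - S\<bar> < r \<longrightarrow> G (of_real x) = g x"
    using powser_local[OF r s] by blast
  obtain Gc where Gc: "Gc holomorphic_on ball (complex_of_real S) r" "\<forall>x. \<bar>x - S\<bar> < r \<longrightarrow> Gc (of_real x) = cnj (g x)"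
    using powser_local[OF r s2] by blast
  show ?thesis
    using r G Gc gf by (intro exI[of _ r] conjI exI[of _ G] exI[of _ Gc]) auto
qed

lemma local_entries:
  fixes p :: "real \<Rightarrow> complex mat"
  assumes an: "\<forall>i<m. \<forall>j<n. analytic_on_unit_interval (\<lambda>t. p t $$ (i,j))" and S: "S \<in> {0..1}"
  shows "\<exists>r>0. \<exists>G Gc. \<forall>i<m. \<forall>j<n. G i j holomorphic_on ball (complex_of_real S) r \<and>
      Gc i j holomorphic_on ball (complex_of_real S) r \<and>
      (\<forall>x\<in>{0..1}. \<bar>x - S\<bar> < r \<longrightarrow> G i j (complex_of_real x) = p x $$ (i,j) \<and> Gc i j (complex_of_real x) = cnj (p x $$ (i,j)))"
proof -
  define Q where "Q = (\<lambda>(ij::nat\<times>nat) (t :: real \<times> (complex \<Rightarrow> complex) \<times> (complex \<Rightarrow> complex)).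
     fst t > 0 \<and> fst (snd t) holomorphic_on ball (complex_of_real S) (fst t) \<and>
     snd (snd t) holomorphic_on ball (complex_of_real S) (fst t) \<and>
     (\<forall>x\<in>{0..1}. \<bar>x - S\<bar> < fst t \<longrightarrow> fst (snd t) (complex_of_real x) = p x $$ ij \<and>
        snd (snd t) (complex_of_real x) = cnj (p x $$ ij)))"
  have "\<forall>ij. \<exists>t. fst ij < m \<longrightarrow> snd ij < n \<longrightarrow> Q ij t"
  proof
    fix ij :: "nat \<times> nat"
    show "\<exists>t. fst ij < m \<longrightarrow> snd ij < n \<longrightarrow> Q ij t"
    proof (cases "fst ij < m \<and> snd ij < n")
      case True
      then have "analytic_on_unit_interval (\<lambda>t. p t $$ ij)" using an by (cases ij) auto
      from local_entry[OF this S] obtain r G Gc where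
        "r > 0" "G holomorphic_on ball (complex_of_real S) r" "Gc holomorphic_on ball (complex_of_real S) r"
        "\<forall>x\<in>{0..1}. \<bar>x - S\<bar> < r \<longrightarrow> G (complex_of_real x) = p x $$ ij \<and> Gc (complex_of_real x) = cnj (p x $$ ij)"
        by blast
      then have "Q ij (r, G, Gc)" unfolding Q_def by simp
      then show ?thesis by blast
    qed auto
  qed
  from choice[OF this] obtain T where T: "\<And>ij. fst ij < m \<Longrightarrow> snd ij < n \<Longrightarrow> Q ij (T ij)" by blast
  define RS where "RS = (\<lambda>ij. fst (T ij)) ` ({..<m} \<times> {..<n})"
  define r where "r = Min (insert 1 RS)"
  have fin: "finite (insert 1 RS)" unfolding RS_def by simp
  have RSpos: "\<forall>x\<in>insert 1 RS. x > 0" unfolding RS_def using T unfolding Q_def by auto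
  have r0: "r > 0" unfolding r_def using fin RSpos by (simp add: Min_gr_iff)
  have rle: "r \<le> fst (T (i,j))" if "i < m" "j < n" for i j
    unfolding r_def using fin that unfolding RS_def by (intro Min_le) auto
  define G where "G = (\<lambda>i j. fst (snd (T (i,j))))"
  define Gc where "Gc = (\<lambda>i j. snd (snd (T (i,j))))"
  have "\<forall>i<m. \<forall>j<n. G i j holomorphic_on ball (complex_of_real S) r \<and>
      Gc i j holomorphic_on ball (complex_of_real S) r \<and>
      (\<forall>x\<in>{0..1}. \<bar>x - S\<bar> < r \<longrightarrow> G i j (complex_of_real x) = p x $$ (i,j) \<and> Gc i j (complex_of_real x) = cnj (p x $$ (i,j)))"
  proof (intro allI impI conjI)
    fix i j assume ij: "i < m" "j < n"
    have Qij: "Q (i,j) (T (i,j))" using T ij by simp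
    have sub: "ball (complex_of_real S) r \<subseteq> ball (complex_of_real S) (fst (T (i,j)))"
      using rle[OF ij] by (rule subset_ball)
    show "G i j holomorphic_on ball (complex_of_real S) r"
      using Qij sub unfolding Q_def G_def by (blast intro: holomorphic_on_subset)
    show "Gc i j holomorphic_on ball (complex_of_real S) r"
      using Qij sub unfolding Q_def Gc_def by (blast intro: holomorphic_on_subset)
    show "\<forall>x\<in>{0..1}. \<bar>x - S\<bar> < r \<longrightarrow> G i j (complex_of_real x) = p x $$ (i,j) \<and> Gc i j (complex_of_real x) = cnj (p x $$ (i,j))"
      using Qij rle[OF ij] unfolding Q_def G_def Gc_def by force
  qed
  then show ?thesis using r0 by blast
qed


lemma adj_mult_index:
  fixes B :: "complex mat"
  assumes B: "B \<in> carrier_mat m n" and ij: "i < n" "j < n"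
  shows "(mat_adjoint B * B) $$ (i,j) = (\<Sum>l<m. cnj (B$$(l,i)) * B$$(l,j))"
proof -
  have dimA: "dim_row (mat_adjoint B) = n" "dim_col (mat_adjoint B) = m"
    using mat_adjoint_carrier[OF B] by auto
  have "(mat_adjoint B * B) $$ (i,j) = row (mat_adjoint B) i \<bullet> col B j"
    using ij B dimA by (simp add: index_mult_mat)
  also have "\<dots> = (\<Sum>l\<in>{0..<m}. mat_adjoint B $$ (i,l) * B $$ (l,j))"
    unfolding scalar_prod_def using ij B dimA by simp
  also have "\<dots> = (\<Sum>l<m. cnj (B$$(l,i)) * B$$(l,j))"
    unfolding atLeast0LessThan
    by (rule sum.cong[OF refl], simp add: mat_adjoint_index[OF B ij(1)])
  finally show ?thesis .
qed

lemma dist_cr: "dist (complex_of_real x) (complex_of_real y) = \<bar>x - y\<bar>"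
  by (metis dist_norm norm_of_real of_real_diff)

definition Dfun :: "complex mat \<Rightarrow> complex" where
  "Dfun B = resultant (char_poly (mat_adjoint B * B)) (pderiv (char_poly (mat_adjoint B * B)))"

lemma local_D:
  fixes p :: "real \<Rightarrow> complex mat"
  assumes an: "\<forall>i<m. \<forall>j<n. analytic_on_unit_interval (\<lambda>t. p t $$ (i,j))" and S: "S \<in> {0..1}"
    and car: "\<forall>t\<in>{0..1}. p t \<in> carrier_mat m n"
  shows "\<exists>r>0. \<exists>F. F holomorphic_on ball (complex_of_real S) r \<and>
    (\<forall>x\<in>{0..1}. \<bar>x - S\<bar> < r \<longrightarrow> F (complex_of_real x) = Dfun (p x))"
proof -
  obtain r G Gc where r: "r > 0" and GG: "\<forall>i<m. \<forall>j<n. G i j holomorphic_on ball (complex_of_real S) r \<and>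
      Gc i j holomorphic_on ball (complex_of_real S) r \<and>
      (\<forall>x\<in>{0..1}. \<bar>x - S\<bar> < r \<longrightarrow> G i j (complex_of_real x) = p x $$ (i,j) \<and> Gc i j (complex_of_real x) = cnj (p x $$ (i,j)))"
    using local_entries[OF an S] by blast
  define N where "N = (\<lambda>z. mat n n (\<lambda>(i,j). \<Sum>l<m. Gc l i z * G l j z))"
  have Nc: "N z \<in> carrier_mat n n" for z unfolding N_def by simp
  have Nent: "(\<lambda>z. N z $$ (i,j)) holomorphic_on ball (complex_of_real S) r" if "i < n" "j < n" for i j
  proof -
    have "(\<lambda>z. \<Sum>l<m. Gc l i z * G l j z) holomorphic_on ball (complex_of_real S) r"
      using GG that by (intro holomorphic_on_sum holomorphic_on_mult) auto
    then show ?thesis unfolding N_def using that by simp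
  qed
  define F where "F = (\<lambda>z. resultant (char_poly (N z)) (pderiv (char_poly (N z))))"
  have Fh: "F holomorphic_on ball (complex_of_real S) r"
    unfolding F_def by (rule holo_Phi[OF Nc Nent])
  have "F (complex_of_real x) = Dfun (p x)" if x: "x \<in> {0..1}" "\<bar>x - S\<bar> < r" for x
  proof -
    have px: "p x \<in> carrier_mat m n" using car x by blast
    have "N (complex_of_real x) = mat_adjoint (p x) * p x"
    proof (rule eq_matI)
      show "dim_row (N (complex_of_real x)) = dim_row (mat_adjoint (p x) * p x)"
        using mat_adjoint_carrier[OF px] unfolding N_def by simp
      show "dim_col (N (complex_of_real x)) = dim_col (mat_adjoint (p x) * p x)"
        using px unfolding N_def by simp
      fix i j assume "i < dim_row (mat_adjoint (p x) * p x)" "j < dim_col (mat_adjoint (p x) * p x)"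
      then have ij: "i < n" "j < n" using mat_adjoint_carrier[OF px] px by auto
      have "N (complex_of_real x) $$ (i,j) = (\<Sum>l<m. Gc l i (complex_of_real x) * G l j (complex_of_real x))"
        unfolding N_def using ij by simp
      also have "\<dots> = (\<Sum>l<m. cnj (p x $$ (l,i)) * p x $$ (l,j))"
        using GG ij x by (intro sum.cong) auto
      also have "\<dots> = (mat_adjoint (p x) * p x) $$ (i,j)"
        using adj_mult_index[OF px ij] by simp
      finally show "N (complex_of_real x) $$ (i,j) = (mat_adjoint (p x) * p x) $$ (i,j)" .
    qed
    then show ?thesis unfolding F_def Dfun_def by simp
  qed
  then show ?thesis using r Fh by blast
qed


theorem theorem4p7:
  fixes m n :: nat and \<Gamma> :: "complex mat set"
  assumes "n \<le> m"
    and "\<Gamma> \<subseteq> carrier_mat m n"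
    and "\<forall>A\<in>\<Gamma>. \<forall>B\<in>\<Gamma>. \<exists>p :: real \<Rightarrow> complex mat.
           (\<forall>i<m. \<forall>j<n. analytic_on_unit_interval (\<lambda>t. p t $$ (i,j))) \<and>
           p 0 = A \<and> p 1 = B \<and> p ` {0..1} \<subseteq> \<Gamma>"
    and "\<exists>A\<in>\<Gamma>. distinct_singular_values A"
  shows "\<forall>A\<in>\<Gamma>. \<forall>\<epsilon>>0. \<exists>B\<in>{C\<in>\<Gamma>. distinct_singular_values C}. frob_dist A B < \<epsilon>"
proof (intro ballI allI impI)
  fix A :: "complex mat" and \<epsilon> :: real
  assume A: "A \<in> \<Gamma>" and e: "\<epsilon> > 0"
  obtain A0 where A0: "A0 \<in> \<Gamma>" "distinct_singular_values A0" using assms(4) by blast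
  obtain p :: "real \<Rightarrow> complex mat" where an: "\<forall>i<m. \<forall>j<n. analytic_on_unit_interval (\<lambda>t. p t $$ (i,j))"
    and p0: "p 0 = A" and p1: "p 1 = A0" and img: "p ` {0..1} \<subseteq> \<Gamma>"
    using assms(3) A A0(1) by blast
  have car: "\<forall>t\<in>{0..1}. p t \<in> carrier_mat m n" using img assms(2) by blast
  have dist_iff: "distinct_singular_values (p t) \<longleftrightarrow> Dfun (p t) \<noteq> 0" if "t \<in> {0..1}" for t
    using distinct_iff[of "p t" m n] car that unfolding Dfun_def by blast
  have D1: "Dfun (p 1) \<noteq> 0" using dist_iff[of 1] A0(2) p1 by simp
  have Acar: "A \<in> carrier_mat m n" using A assms(2) by blast
  obtain \<delta> where \<delta>: "\<delta> > 0" and close: "\<forall>t\<in>{0..1}. t < \<delta> \<longrightarrow> frob_dist A (p t) < \<epsilon>"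
  proof -
    obtain r0 G Gc where r0: "r0 > 0" and GG: "\<forall>i<m. \<forall>j<n. G i j holomorphic_on ball (complex_of_real 0) r0 \<and>
      Gc i j holomorphic_on ball (complex_of_real 0) r0 \<and>
      (\<forall>x\<in>{0..1}. \<bar>x - 0\<bar> < r0 \<longrightarrow> G i j (complex_of_real x) = p x $$ (i,j) \<and> Gc i j (complex_of_real x) = cnj (p x $$ (i,j)))"
      using local_entries[OF an, of 0] by auto
    define \<phi> where "\<phi> = (\<lambda>t. sqrt (\<Sum>i<m. \<Sum>j<n. (cmod (G i j (complex_of_real 0) - G i j (complex_of_real t)))\<^sup>2))"
    have cG: "isCont (\<lambda>t. G i j (complex_of_real t)) 0" if "i < m" "j < n" for i j
    proof -
      have "continuous_on (ball (complex_of_real 0) r0) (G i j)"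
        using GG that holomorphic_on_imp_continuous_on by blast
      then have "isCont (G i j) (complex_of_real 0)"
        using r0 by (simp add: continuous_on_eq_continuous_at)
      moreover have "isCont (\<lambda>t. complex_of_real t) 0" by (intro continuous_intros)
      ultimately show ?thesis using isCont_o2 by fastforce
    qed
    have "isCont \<phi> 0" unfolding \<phi>_def
      by (intro continuous_intros) (auto intro: cG)
    then obtain d where d: "d > 0" and dd: "\<forall>t. dist t 0 < d \<longrightarrow> dist (\<phi> t) (\<phi> 0) < \<epsilon>"
      using e unfolding continuous_at_eps_delta by blast
    have phi0: "\<phi> 0 = 0" unfolding \<phi>_def by simp
    show ?thesis
    proof (rule that[of "min d r0"])
      show "min d r0 > 0" using d r0 by simp
      show "\<forall>t\<in>{0..1}. t < min d r0 \<longrightarrow> frob_dist A (p t) < \<epsilon>"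
      proof (intro ballI impI)
        fix t assume t: "t \<in> {0..1}" "t < min d r0"
        have eqs: "A $$ (i,j) - p t $$ (i,j) = G i j (complex_of_real 0) - G i j (complex_of_real t)"
          if ij: "i < m" "j < n" for i j
        proof -
          have h: "\<forall>x\<in>{0..1}. \<bar>x - 0\<bar> < r0 \<longrightarrow> G i j (complex_of_real x) = p x $$ (i,j)"
            using GG ij by blast
          have "G i j (complex_of_real 0) = p 0 $$ (i,j)" using h[rule_format, of 0] r0 by simp
          moreover have "G i j (complex_of_real t) = p t $$ (i,j)" using h[rule_format, of t] t by simp
          ultimately show ?thesis using p0 by simp
        qed
        have "frob_dist A (p t) = \<phi> t"
          unfolding frob_dist_def \<phi>_def using Acar
          by (auto intro!: arg_cong[where f=sqrt] sum.cong simp: eqs)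
        moreover have "dist (\<phi> t) (\<phi> 0) < \<epsilon>" using dd t by auto
        ultimately show "frob_dist A (p t) < \<epsilon>" using phi0 by (simp add: dist_real_def)
      qed
    qed
  qed
  have "\<exists>t\<in>{0..1}. t < \<delta> \<and> Dfun (p t) \<noteq> 0"
  proof (rule ccontr)
    assume "\<not> ?thesis"
    then have Z: "\<forall>t\<in>{0..1}. t < \<delta> \<longrightarrow> Dfun (p t) = 0" by auto
    define P where "P = {s\<in>{0..1}. \<forall>t\<in>{0..s}. Dfun (p t) = 0}"
    define s0 where "s0 = min (\<delta>/2) 1"
    have s0P: "s0 \<in> P" unfolding P_def s0_def using Z \<delta> by auto
    have bdd: "bdd_above P" unfolding P_def by (rule bdd_aboveI[of _ 1]) auto
    define S where "S = Sup P"
    have S0: "s0 \<le> S" unfolding S_def using s0P bdd by (rule cSup_upper)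
    have S1: "S \<le> 1" unfolding S_def using s0P by (intro cSup_least) (auto simp: P_def)
    have Spos: "S > 0" using S0 \<delta> unfolding s0_def by simp
    have below: "Dfun (p t) = 0" if "t \<in> {0..1}" "t < S" for t
    proof -
      obtain s where "s \<in> P" "t < s" using \<open>t < S\<close> less_cSup_iff[of P t] s0P bdd unfolding S_def by blast
      then show ?thesis using that unfolding P_def by auto
    qed
    obtain r F where r: "r > 0" and Fh: "F holomorphic_on ball (complex_of_real S) r"
      and FD: "\<forall>x\<in>{0..1}. \<bar>x - S\<bar> < r \<longrightarrow> F (complex_of_real x) = Dfun (p x)"
      using local_D[OF an _ car, of S] S1 Spos by auto
    define U where "U = complex_of_real ` {t. max 0 (S - r) < t \<and> t < S}"
    have Usub: "U \<subseteq> ball (complex_of_real S) r"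
      unfolding U_def by (auto simp: dist_cr dist_real_def)
    have Uz: "F u = 0" if uU: "u \<in> U" for u
    proof -
      obtain t where t: "u = complex_of_real t" "max 0 (S - r) < t" "t < S" using uU unfolding U_def by blast
      then have "t \<in> {0..1}" "\<bar>t - S\<bar> < r" using S1 by auto
      then show ?thesis using FD below t by auto
    qed
    have lim: "complex_of_real S islimpt U"
      unfolding islimpt_approachable
    proof (intro allI impI)
      fix e :: real assume e: "e > 0"
      define t where "t = S - min e (min r S) / 2"
      have "max 0 (S - r) < t" "t < S" unfolding t_def using e r Spos by auto
      then have "complex_of_real t \<in> U" unfolding U_def by blast
      moreover have "complex_of_real t \<noteq> complex_of_real S" using \<open>t < S\<close> by simp
      moreover have "dist (complex_of_real t) (complex_of_real S) < e"
        unfolding t_def using e r Spos by (simp add: dist_cr dist_real_def)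
      ultimately show "\<exists>x'\<in>U. x' \<noteq> complex_of_real S \<and> dist x' (complex_of_real S) < e" by blast
    qed
    have Fz: "F w = 0" if "w \<in> ball (complex_of_real S) r" for w
      by (rule analytic_continuation[OF Fh open_ball convex_connected[OF convex_ball] Usub _ lim Uz that])
        (use r in simp)
    have near: "Dfun (p x) = 0" if "x \<in> {0..1}" "\<bar>x - S\<bar> < r" for x
    proof -
      have "complex_of_real x \<in> ball (complex_of_real S) r"
        using that by (simp add: dist_cr dist_real_def abs_minus_commute)
      then show ?thesis using Fz FD that by auto
    qed
    define s1 where "s1 = min 1 (S + r/2)"
    have "s1 \<in> P" unfolding P_def
    proof (intro CollectI conjI ballI)
      show "s1 \<in> {0..1}" unfolding s1_def using Spos r by auto
      fix t assume t: "t \<in> {0..s1}"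
      then have t01: "t \<in> {0..1}" unfolding s1_def by auto
      show "Dfun (p t) = 0"
      proof (cases "t < S")
        case True then show ?thesis using below t01 by blast
      next
        case False
        then have "\<bar>t - S\<bar> < r" using t r unfolding s1_def by auto
        then show ?thesis using near t01 by blast
      qed
    qed
    then have "s1 \<le> S" unfolding S_def using bdd by (rule cSup_upper)
    then have "S = 1" using S1 r unfolding s1_def by auto
    then have "Dfun (p 1) = 0" using near[of 1] r by auto
    then show False using D1 by simp
  qed
  then obtain t where t: "t \<in> {0..1}" "t < \<delta>" "Dfun (p t) \<noteq> 0" by blast
  show "\<exists>B\<in>{C\<in>\<Gamma>. distinct_singular_values C}. frob_dist A B < \<epsilon>"
  proof (rule bexI[of _ "p t"])
    show "frob_dist A (p t) < \<epsilon>" using close t by blast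
    show "p t \<in> {C \<in> \<Gamma>. distinct_singular_values C}" using img t dist_iff by auto
  qed
qed

end
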